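(* Let $G$ be a finite abstract simplicial complex with connection matrix $L$. Let $p(G)$ and $n(G)$ be the number of positive and negative eigenvalues of $L$ (counted with multiplicity), and let $b(G)$ and $f(G)$ be the number of even-dimensional and odd-dimensional simplices of $G$, respectively. Then $b(G)=p(G)$ and $f(G)=n(G)$. Consequently $\chi(G)=p(G)-n(G)$.
   Context: A finite abstract simplicial complex $G$ is a finite set of non-empty finite sets closed under taking non-empty subsets; its elements are simplices, and $\dim(x)=|x|-1$. The connection matrix $L$ of $G$ is the symmetric matrix indexed by simplices with $L(x,y)=1$ if $x\cap y\neq\emptyset$ and $0$ otherwise. The Euler characteristic is $\chi(G)=\sum_{x\in G}(-1)^{\dim(x)}$. *)

theory Defs
  imports "Jordan_Normal_Form.Char_Poly"
begin

definition simplicial_complex :: "'a set set \<Rightarrow> bool" where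
  "simplicial_complex G \<longleftrightarrow> finite G \<and>
     (\<forall>x\<in>G. finite x \<and> x \<noteq> {}) \<and>
     (\<forall>x\<in>G. \<forall>y. y \<subseteq> x \<and> y \<noteq> {} \<longrightarrow> y \<in> G)"

definition sdim :: "'a set \<Rightarrow> nat" where
  "sdim x = card x - 1"

definition simplex_list :: "'a set set \<Rightarrow> 'a set list" where
  "simplex_list G = (SOME xs. distinct xs \<and> set xs = G)"

definition connection_matrix :: "'a set set \<Rightarrow> real mat" where
  "connection_matrix G = (let xs = simplex_list G in
     mat (length xs) (length xs)
       (\<lambda>(i,j). if xs ! i \<inter> xs ! j \<noteq> {} then 1 else 0))"

definition pos_eigs :: "real mat \<Rightarrow> nat" where
  "pos_eigs A = (\<Sum>c\<in>{c. eigenvalue A c \<and> c > 0}. order c (char_poly A))"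

definition neg_eigs :: "real mat \<Rightarrow> nat" where
  "neg_eigs A = (\<Sum>c\<in>{c. eigenvalue A c \<and> c < 0}. order c (char_poly A))"

definition euler_char :: "'a set set \<Rightarrow> int" where
  "euler_char G = (\<Sum>x\<in>G. (-1) ^ sdim x)"

end

theory Submission
  imports Defs "Jordan_Normal_Form.Schur_Decomposition"
begin

lemma sym_real_eigenvalue:
  fixes A :: "real mat"
  assumes A: "A \<in> carrier_mat n n" and n: "n > 0" and sym: "transpose_mat A = A"
  shows "\<exists>e. eigenvalue A e"
proof -
  define B where "B = map_mat complex_of_real A"
  have B: "B \<in> carrier_mat n n" using A unfolding B_def by auto
  have cp: "char_poly B = map_poly complex_of_real (char_poly A)"
    unfolding B_def by (rule of_real_hom.char_poly_hom[OF A])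
  have "degree (char_poly B) = n" using degree_monic_char_poly[OF B] by auto
  hence "\<not> constant (poly (char_poly B))" using n
    by (metis constant_degree neq0_conv)
  then obtain c where "poly (char_poly B) c = 0" using fundamental_theorem_of_algebra by blast
  hence "eigenvalue B c" using eigenvalue_root_char_poly[OF B] by simp
  then obtain v where ev: "eigenvector B v c" unfolding eigenvalue_def by auto
  hence v: "v \<in> carrier_vec n" and v0: "v \<noteq> 0\<^sub>v n" and Bv: "B *\<^sub>v v = c \<cdot>\<^sub>v v"
    unfolding eigenvector_def using B by auto
  have Bij: "\<And>i j. i < n \<Longrightarrow> j < n \<Longrightarrow> B $$ (i,j) = complex_of_real (A $$ (i,j))"
    unfolding B_def using A by auto
  have Bsym: "\<And>i j. i < n \<Longrightarrow> j < n \<Longrightarrow> B $$ (i,j) = B $$ (j,i)"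
  proof -
    fix i j assume i: "i < n" and j: "j < n"
    have "A $$ (i,j) = transpose_mat A $$ (i,j)" using sym by simp
    also have "\<dots> = A $$ (j,i)" using A i j by auto
    finally show "B $$ (i,j) = B $$ (j,i)" using Bij i j by simp
  qed
  define s where "s = (\<Sum>i<n. cnj (v $ i) * (\<Sum>j<n. B $$ (i,j) * v $ j))"
  define N where "N = (\<Sum>i<n. cnj (v $ i) * v $ i)"
  have Bvi: "\<And>i. i < n \<Longrightarrow> (\<Sum>j<n. B $$ (i,j) * v $ j) = c * v $ i"
  proof -
    fix i assume i: "i < n"
    have "(B *\<^sub>v v) $ i = (\<Sum>j<n. B $$ (i,j) * v $ j)"
      using B v i by (auto simp: mult_mat_vec_def scalar_prod_def lessThan_atLeast0 ac_simps)
    thus "(\<Sum>j<n. B $$ (i,j) * v $ j) = c * v $ i" using Bv i v by simp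
  qed
  have "s = (\<Sum>i<n. cnj (v $ i) * (c * v $ i))" unfolding s_def
    by (rule sum.cong, auto simp: Bvi)
  hence s1: "s = c * N" unfolding N_def by (simp add: sum_distrib_left ac_simps)
  have "cnj s = (\<Sum>i<n. v $ i * (\<Sum>j<n. B $$ (i,j) * cnj (v $ j)))"
    unfolding s_def by (simp add: Bij)
  also have "\<dots> = (\<Sum>i<n. \<Sum>j<n. v $ i * B $$ (i,j) * cnj (v $ j))"
    by (simp add: sum_distrib_left ac_simps)
  also have "\<dots> = (\<Sum>j<n. \<Sum>i<n. v $ i * B $$ (i,j) * cnj (v $ j))"
    by (rule sum.swap)
  also have "\<dots> = s" unfolding s_def
    by (auto simp: sum_distrib_left Bsym ac_simps intro!: sum.cong)
  finally have s2: "cnj s = s" .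
  have Nreal: "N = complex_of_real (\<Sum>i<n. (cmod (v $ i))^2)"
    unfolding N_def of_real_sum by (rule sum.cong, simp, metis complex_norm_square mult.commute)
  have "\<exists>i<n. v $ i \<noteq> 0" using v v0 by (metis eq_vecI carrier_vecD index_zero_vec)
  then obtain i where i: "i < n" "v $ i \<noteq> 0" by auto
  have "(\<Sum>i<n. (cmod (v $ i))^2) > 0"
    by (rule sum_pos2[of _ i], insert i, auto)
  hence N0: "N \<noteq> 0" unfolding Nreal by (metis of_real_eq_0_iff less_irrefl)
  have "cnj N = N" unfolding Nreal by simp
  hence "cnj c * N = c * N" using s1 s2 by (metis complex_cnj_mult)
  hence cc: "cnj c = c" using N0 by simp
  hence creal: "c = complex_of_real (Re c)" by (simp add: complex_eq_iff)
  have "poly (map_poly complex_of_real (char_poly A)) (complex_of_real (Re c)) = 0"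
    using \<open>poly (char_poly B) c = 0\<close> creal cp by simp
  hence "poly (char_poly A) (Re c) = 0" by simp
  hence "eigenvalue A (Re c)" using eigenvalue_root_char_poly[OF A] by simp
  thus ?thesis by blast
qed

lemma real_conjugate_vec[simp]: "conjugate (v :: real vec) = v"
  by (rule eq_vecI, auto simp: conjugate_vec_def)

lemma orth_completion:
  fixes v :: "real vec"
  assumes v: "v \<in> carrier_vec n" and v0: "v \<noteq> 0\<^sub>v n"
  shows "\<exists>Q \<in> carrier_mat n n. transpose_mat Q * Q = 1\<^sub>m n \<and> col Q 0 = (1 / sqrt (v \<bullet> v)) \<cdot>\<^sub>v v"
proof -
  interpret cof_vec_space n "TYPE(real)" .
  define b where "b = basis_completion v"
  from basis_completion[OF v v0, folded b_def]
  have dist_b: "distinct b" 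
    and indep: "\<not> lin_dep (set b)" and b: "set b \<subseteq> carrier_vec n" and hdb: "hd b = v" 
    and len_b: "length b = n" by auto
  have n: "n \<noteq> 0" using v v0 by auto
  from hdb len_b n obtain vs where bv: "b = v # vs" by (cases b, auto)
  define ws where "ws = gram_schmidt n b"
  from gram_schmidt_result[OF b dist_b indep refl, folded ws_def]
  have ws: "set ws \<subseteq> carrier_vec n" "corthogonal ws" "length ws = n" 
    by (auto simp: len_b)
  from gram_schmidt_hd[OF v, of vs, folded bv] have hdws: "hd ws = v" unfolding ws_def .
  define us where "us = map (\<lambda>w. (1 / sqrt (w \<bullet> w)) \<cdot>\<^sub>v w) ws"
  define Q where "Q = mat_of_cols n us"
  have lus: "length us = n" unfolding us_def using ws by simp
  have wsi: "\<And>i. i < n \<Longrightarrow> ws ! i \<in> carrier_vec n" using ws by auto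
  have orth: "\<And>i j. i < n \<Longrightarrow> j < n \<Longrightarrow> ws ! i \<bullet> ws ! j = 0 \<longleftrightarrow> i \<noteq> j"
    using corthogonalD[OF ws(2)] ws(3) by simp
  have pos: "\<And>i. i < n \<Longrightarrow> ws ! i \<bullet> ws ! i > 0"
  proof -
    fix i assume i: "i < n"
    have "ws ! i \<bullet> ws ! i \<ge> 0" using conjugate_square_ge_0_vec[of "ws ! i"] by simp
    with orth[OF i i] show "ws ! i \<bullet> ws ! i > 0" by auto
  qed
  have Q: "Q \<in> carrier_mat n n" unfolding Q_def using lus by auto
  have colQ: "\<And>i. i < n \<Longrightarrow> col Q i = us ! i" unfolding Q_def using lus
    by (intro col_mat_of_cols, auto simp: us_def wsi ws(3))
  have "transpose_mat Q * Q = 1\<^sub>m n"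
  proof (rule eq_matI)
    fix i j assume i: "i < dim_row (1\<^sub>m n)" and j: "j < dim_col (1\<^sub>m n)"
    hence i: "i < n" and j: "j < n" by auto
    have "(transpose_mat Q * Q) $$ (i,j) = col Q i \<bullet> col Q j" using Q i j by simp
    also have "\<dots> = (1 / sqrt (ws ! i \<bullet> ws ! i)) * (1 / sqrt (ws ! j \<bullet> ws ! j)) * (ws ! i \<bullet> ws ! j)"
      unfolding colQ[OF i] colQ[OF j] us_def using i j ws(3) wsi[OF i] wsi[OF j] by simp
    also have "\<dots> = 1\<^sub>m n $$ (i,j)"
    proof (cases "i = j")
      case True
      have p: "ws ! i \<bullet> ws ! i > 0" by (rule pos[OF i])
      have "1 / sqrt (ws ! i \<bullet> ws ! i) * (1 / sqrt (ws ! i \<bullet> ws ! i)) * (ws ! i \<bullet> ws ! i) = 1"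
        using p by (simp add: field_simps)
      thus ?thesis using True i by simp
    next
      case False
      thus ?thesis using orth[OF i j] i j by simp
    qed
    finally show "(transpose_mat Q * Q) $$ (i,j) = 1\<^sub>m n $$ (i,j)" .
  qed (insert Q, auto)
  moreover have "col Q 0 = (1 / sqrt (v \<bullet> v)) \<cdot>\<^sub>v v"
    unfolding colQ[OF neq0_conv[THEN iffD1, OF n]] us_def using hdws ws(3) n
    by (cases ws, auto)
  ultimately show ?thesis using Q by blast
qed

lemma quad_entry:
  fixes A Q :: "'a :: comm_ring_1 mat"
  assumes Q: "Q \<in> carrier_mat n k" and A: "A \<in> carrier_mat n n" and i: "i < k" and j: "j < k"
  shows "(transpose_mat Q * A * Q) $$ (i,j) = col Q i \<bullet> (A *\<^sub>v col Q j)"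
proof -
  have "transpose_mat Q * A * Q = transpose_mat Q * (A * Q)"
    by (rule assoc_mult_mat[OF _ A Q], insert Q, auto)
  also have "\<dots> $$ (i,j) = row (transpose_mat Q) i \<bullet> col (A * Q) j"
    using Q A i j by auto
  also have "\<dots> = col Q i \<bullet> (A *\<^sub>v col Q j)"
    using Q A i j by (simp add: col_mult2[OF A Q j])
  finally show ?thesis .
qed

lemma block_orth:
  fixes Q3 :: "real mat"
  assumes Q3: "Q3 \<in> carrier_mat m m" and Q3o: "transpose_mat Q3 * Q3 = 1\<^sub>m m"
  shows "four_block_mat (1\<^sub>m 1) (0\<^sub>m 1 m) (0\<^sub>m m 1) (transpose_mat Q3) * four_block_mat (1\<^sub>m 1) (0\<^sub>m 1 m) (0\<^sub>m m 1) Q3 = 1\<^sub>m (Suc m)"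
proof -
  have "four_block_mat (1\<^sub>m 1) (0\<^sub>m 1 m) (0\<^sub>m m 1) (transpose_mat Q3) * four_block_mat (1\<^sub>m 1) (0\<^sub>m 1 m) (0\<^sub>m m 1) Q3
   = four_block_mat (1\<^sub>m 1 * 1\<^sub>m 1 + 0\<^sub>m 1 m * 0\<^sub>m m 1) (1\<^sub>m 1 * 0\<^sub>m 1 m + 0\<^sub>m 1 m * Q3)
       (0\<^sub>m m 1 * 1\<^sub>m 1 + transpose_mat Q3 * 0\<^sub>m m 1) (0\<^sub>m m 1 * 0\<^sub>m 1 m + transpose_mat Q3 * Q3)"
    by (rule mult_four_block_mat, insert Q3, auto)
  also have "\<dots> = four_block_mat (1\<^sub>m 1) (0\<^sub>m 1 m) (0\<^sub>m m 1) (1\<^sub>m m)"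
    using Q3 Q3o by simp
  also have "\<dots> = 1\<^sub>m (Suc m)" by simp
  finally show ?thesis .
qed

lemma block_diag:
  fixes Q3 A3 :: "real mat"
  assumes Q3: "Q3 \<in> carrier_mat m m" and A3: "A3 \<in> carrier_mat m m"
  shows "four_block_mat (1\<^sub>m 1) (0\<^sub>m 1 m) (0\<^sub>m m 1) (transpose_mat Q3) * four_block_mat (e \<cdot>\<^sub>m 1\<^sub>m 1) (0\<^sub>m 1 m) (0\<^sub>m m 1) A3 * four_block_mat (1\<^sub>m 1) (0\<^sub>m 1 m) (0\<^sub>m m 1) Q3 
    = four_block_mat (e \<cdot>\<^sub>m 1\<^sub>m 1) (0\<^sub>m 1 m) (0\<^sub>m m 1) (transpose_mat Q3 * A3 * Q3)"
proof -
  have "four_block_mat (1\<^sub>m 1) (0\<^sub>m 1 m) (0\<^sub>m m 1) (transpose_mat Q3) * four_block_mat (e \<cdot>\<^sub>m 1\<^sub>m 1) (0\<^sub>m 1 m) (0\<^sub>m m 1) A3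
   = four_block_mat (1\<^sub>m 1 * (e \<cdot>\<^sub>m 1\<^sub>m 1) + 0\<^sub>m 1 m * 0\<^sub>m m 1) (1\<^sub>m 1 * 0\<^sub>m 1 m + 0\<^sub>m 1 m * A3)
       (0\<^sub>m m 1 * (e \<cdot>\<^sub>m 1\<^sub>m 1) + transpose_mat Q3 * 0\<^sub>m m 1) (0\<^sub>m m 1 * 0\<^sub>m 1 m + transpose_mat Q3 * A3)"
    by (rule mult_four_block_mat, insert Q3 A3, auto)
  also have "\<dots> = four_block_mat (e \<cdot>\<^sub>m 1\<^sub>m 1) (0\<^sub>m 1 m) (0\<^sub>m m 1) (transpose_mat Q3 * A3)"
    using Q3 A3 by simp
  finally have 1: "four_block_mat (1\<^sub>m 1) (0\<^sub>m 1 m) (0\<^sub>m m 1) (transpose_mat Q3) * four_block_mat (e \<cdot>\<^sub>m 1\<^sub>m 1) (0\<^sub>m 1 m) (0\<^sub>m m 1) A3 = four_block_mat (e \<cdot>\<^sub>m 1\<^sub>m 1) (0\<^sub>m 1 m) (0\<^sub>m m 1) (transpose_mat Q3 * A3)" .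
  have "four_block_mat (e \<cdot>\<^sub>m 1\<^sub>m 1) (0\<^sub>m 1 m) (0\<^sub>m m 1) (transpose_mat Q3 * A3) * four_block_mat (1\<^sub>m 1) (0\<^sub>m 1 m) (0\<^sub>m m 1) Q3
   = four_block_mat ((e \<cdot>\<^sub>m 1\<^sub>m 1) * 1\<^sub>m 1 + 0\<^sub>m 1 m * 0\<^sub>m m 1) ((e \<cdot>\<^sub>m 1\<^sub>m 1) * 0\<^sub>m 1 m + 0\<^sub>m 1 m * Q3)
       (0\<^sub>m m 1 * 1\<^sub>m 1 + (transpose_mat Q3 * A3) * 0\<^sub>m m 1) (0\<^sub>m m 1 * 0\<^sub>m 1 m + (transpose_mat Q3 * A3) * Q3)"
    by (rule mult_four_block_mat, insert Q3 A3, auto)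
  also have "\<dots> = four_block_mat (e \<cdot>\<^sub>m 1\<^sub>m 1) (0\<^sub>m 1 m) (0\<^sub>m m 1) (transpose_mat Q3 * A3 * Q3)"
    using Q3 A3 by simp
  finally show ?thesis unfolding 1 .
qed

lemma spectral:
  fixes A :: "real mat"
  assumes "A \<in> carrier_mat n n" "transpose_mat A = A"
  shows "\<exists>Q d. Q \<in> carrier_mat n n \<and> transpose_mat Q * Q = 1\<^sub>m n \<and>
     transpose_mat Q * A * Q = mat n n (\<lambda>(i,j). if i = j then d i else 0)"
  using assms
proof (induction n arbitrary: A)
  case 0
  show ?case
    by (rule exI[of _ "1\<^sub>m 0"], rule exI[of _ "\<lambda>_. 0"], insert 0, auto)
next
  case (Suc m A)
  let ?n = "Suc m"
  have A: "A \<in> carrier_mat ?n ?n" and sym: "transpose_mat A = A" using Suc by auto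
  obtain e where "eigenvalue A e" using sym_real_eigenvalue[OF A _ sym] by auto
  then obtain v where "eigenvector A v e" unfolding eigenvalue_def by auto
  hence v: "v \<in> carrier_vec ?n" and v0: "v \<noteq> 0\<^sub>v ?n" and Av: "A *\<^sub>v v = e \<cdot>\<^sub>v v"
    unfolding eigenvector_def using A by auto
  obtain Q1 where Q1: "Q1 \<in> carrier_mat ?n ?n" and Q1o: "transpose_mat Q1 * Q1 = 1\<^sub>m ?n"
    and c0: "col Q1 0 = (1 / sqrt (v \<bullet> v)) \<cdot>\<^sub>v v"
    using orth_completion[OF v v0] by auto
  have Au: "A *\<^sub>v col Q1 0 = e \<cdot>\<^sub>v col Q1 0"
    unfolding c0 using A v Av by (simp add: mult_mat_vec smult_smult_assoc mult.commute)
  define A' where "A' = transpose_mat Q1 * A * Q1"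
  have A': "A' \<in> carrier_mat ?n ?n" unfolding A'_def using Q1 A by auto
  have Q1t: "transpose_mat Q1 \<in> carrier_mat ?n ?n" using Q1 by simp
  have A'sym: "transpose_mat A' = A'"
  proof -
    have "transpose_mat A' = transpose_mat Q1 * transpose_mat (transpose_mat Q1 * A)"
      unfolding A'_def by (rule transpose_mult[OF mult_carrier_mat[OF Q1t A] Q1])
    also have "transpose_mat (transpose_mat Q1 * A) = transpose_mat A * Q1"
      using transpose_mult[OF Q1t A] by simp
    also have "transpose_mat Q1 * (transpose_mat A * Q1) = A'"
      unfolding A'_def sym by (rule assoc_mult_mat[OF Q1t A Q1, symmetric])
    finally show ?thesis .
  qed
  have colQ: "\<And>i. i < ?n \<Longrightarrow> col Q1 i \<in> carrier_vec ?n" using Q1 by auto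
  have oQ: "\<And>i j. i < ?n \<Longrightarrow> j < ?n \<Longrightarrow> col Q1 i \<bullet> col Q1 j = (if i = j then 1 else 0)"
  proof -
    fix i j assume i: "i < ?n" and j: "j < ?n"
    have "(transpose_mat Q1 * Q1) $$ (i,j) = col Q1 i \<bullet> col Q1 j" using Q1 i j by simp
    thus "col Q1 i \<bullet> col Q1 j = (if i = j then 1 else 0)" using Q1o i j by simp
  qed
  have A'0: "\<And>i. i < ?n \<Longrightarrow> A' $$ (i,0) = (if i = 0 then e else 0)"
  proof -
    fix i assume i: "i < ?n"
    have "A' $$ (i,0) = col Q1 i \<bullet> (A *\<^sub>v col Q1 0)"
      unfolding A'_def by (rule quad_entry[OF Q1 A i], simp)
    also have "\<dots> = e * (col Q1 i \<bullet> col Q1 0)" unfolding Au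
      using colQ[OF i] colQ[of 0] by simp
    finally show "A' $$ (i,0) = (if i = 0 then e else 0)" using oQ[OF i, of 0] by simp
  qed
  have A'sym': "\<And>i j. i < ?n \<Longrightarrow> j < ?n \<Longrightarrow> A' $$ (i,j) = A' $$ (j,i)"
  proof -
    fix i j assume i: "i < ?n" and j: "j < ?n"
    have "A' $$ (i,j) = transpose_mat A' $$ (i,j)" using A'sym by simp
    thus "A' $$ (i,j) = A' $$ (j,i)" using A' i j by simp
  qed
  define A3 where "A3 = mat m m (\<lambda>(i,j). A' $$ (Suc i, Suc j))"
  have A3: "A3 \<in> carrier_mat m m" unfolding A3_def by simp
  have A3sym: "transpose_mat A3 = A3"
    by (rule eq_matI, auto simp: A3_def A'sym')
  from Suc.IH[OF A3 A3sym] obtain Q3 d3 where Q3: "Q3 \<in> carrier_mat m m"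
    and Q3o: "transpose_mat Q3 * Q3 = 1\<^sub>m m"
    and Q3d: "transpose_mat Q3 * A3 * Q3 = mat m m (\<lambda>(i,j). if i = j then d3 i else 0)" by auto
  define B where "B = four_block_mat (1\<^sub>m 1) (0\<^sub>m 1 m) (0\<^sub>m m 1) Q3"
  have B: "B \<in> carrier_mat ?n ?n" unfolding B_def using Q3 by auto
  have Bt: "transpose_mat B = four_block_mat (1\<^sub>m 1) (0\<^sub>m 1 m) (0\<^sub>m m 1) (transpose_mat Q3)"
    unfolding B_def by (subst transpose_four_block_mat[of _ 1 1 _ m _ m], insert Q3, auto)
  have A'b: "A' = four_block_mat (e \<cdot>\<^sub>m 1\<^sub>m 1) (0\<^sub>m 1 m) (0\<^sub>m m 1) A3"
  proof (rule eq_matI)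
    fix i j assume i: "i < dim_row (four_block_mat (e \<cdot>\<^sub>m 1\<^sub>m 1) (0\<^sub>m 1 m) (0\<^sub>m m 1) A3)"
      and j: "j < dim_col (four_block_mat (e \<cdot>\<^sub>m 1\<^sub>m 1) (0\<^sub>m 1 m) (0\<^sub>m m 1) A3)"
    hence i: "i < ?n" and j: "j < ?n" using A3 by auto
    show "A' $$ (i,j) = four_block_mat (e \<cdot>\<^sub>m 1\<^sub>m 1) (0\<^sub>m 1 m) (0\<^sub>m m 1) A3 $$ (i,j)"
    proof (cases "j = 0")
      case True thus ?thesis using A'0[OF i] i A3 by auto
    next
      case False
      show ?thesis
      proof (cases "i = 0")
        case True
        thus ?thesis using A'0[OF j] A'sym'[OF i j] False j A3 by auto
      next
        case False2: False
        thus ?thesis using False i j A3 by (auto simp: A3_def)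
      qed
    qed
  qed (insert A' A3, auto)
  define Q where "Q = Q1 * B"
  define d where "d = (\<lambda>i. if i = 0 then e else d3 (i - 1))"
  have Q: "Q \<in> carrier_mat ?n ?n" unfolding Q_def using Q1 B by auto
  have Qt: "transpose_mat Q = transpose_mat B * transpose_mat Q1"
    unfolding Q_def by (rule transpose_mult[OF Q1 B])
  have Bt': "transpose_mat B \<in> carrier_mat ?n ?n" using B by simp
  have "transpose_mat Q * Q = transpose_mat B * (transpose_mat Q1 * (Q1 * B))"
    unfolding Qt by (unfold Q_def, rule assoc_mult_mat[OF Bt' Q1t mult_carrier_mat[OF Q1 B]])
  also have "transpose_mat Q1 * (Q1 * B) = (transpose_mat Q1 * Q1) * B"
    by (rule assoc_mult_mat[OF Q1t Q1 B, symmetric])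
  also have "transpose_mat B * ((transpose_mat Q1 * Q1) * B) = transpose_mat B * (transpose_mat Q1 * Q1) * B"
    by (rule assoc_mult_mat[OF Bt' mult_carrier_mat[OF Q1t Q1] B, symmetric])
  also have "\<dots> = transpose_mat B * B" unfolding Q1o using B by simp
  also have "\<dots> = 1\<^sub>m ?n" unfolding Bt
    by (unfold B_def, rule block_orth[OF Q3 Q3o])
  finally have Qo: "transpose_mat Q * Q = 1\<^sub>m ?n" .
  have "transpose_mat Q * A * Q = transpose_mat B * (transpose_mat Q1 * A) * (Q1 * B)"
    unfolding Qt by (unfold Q_def, subst assoc_mult_mat[OF Bt' Q1t A], rule refl)
  also have "\<dots> = transpose_mat B * ((transpose_mat Q1 * A) * (Q1 * B))"
    by (rule assoc_mult_mat[OF Bt' mult_carrier_mat[OF Q1t A] mult_carrier_mat[OF Q1 B]])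
  also have "(transpose_mat Q1 * A) * (Q1 * B) = A' * B"
    unfolding A'_def by (rule assoc_mult_mat[OF mult_carrier_mat[OF Q1t A] Q1 B, symmetric])
  also have "transpose_mat B * (A' * B) = transpose_mat B * A' * B"
    by (rule assoc_mult_mat[OF Bt' A' B, symmetric])
  also have "\<dots> = four_block_mat (e \<cdot>\<^sub>m 1\<^sub>m 1) (0\<^sub>m 1 m) (0\<^sub>m m 1) (transpose_mat Q3 * A3 * Q3)"
    unfolding Bt A'b
    by (unfold B_def, rule block_diag[OF Q3 A3])
  also have "\<dots> = mat ?n ?n (\<lambda>(i,j). if i = j then d i else 0)"
    unfolding Q3d by (rule eq_matI, auto simp: d_def)
  finally show ?case using Q Qo by blast
qed


lemma order_linear_prod:
  fixes ds :: "real list"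
  shows "Polynomial.order c (\<Prod>a\<leftarrow>ds. [:- a, 1:]) = count_list ds c"
proof (induction ds)
  case Nil
  then show ?case by (simp add: order_0I)
next
  case (Cons a ds)
  have nz: "(\<Prod>a\<leftarrow>ds. [:- a, 1:]) \<noteq> (0 :: real poly)"
  proof -
    have "monic (\<Prod>a\<leftarrow>ds. [:- a, 1:] :: real poly)" by (rule monic_prod_list, auto)
    thus ?thesis by auto
  qed
  have "Polynomial.order c ([:- a, 1:] * (\<Prod>a\<leftarrow>ds. [:- a, 1:])) = Polynomial.order c [:- a, 1:] + Polynomial.order c (\<Prod>a\<leftarrow>ds. [:- a, 1:])"
    by (rule order_mult, metis nz mult_eq_0_iff pCons_eq_0_iff one_neq_zero)
  then show ?case using Cons by (auto simp: order_linear')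
qed

lemma sum_count_list:
  assumes "finite S"
  shows "(\<Sum>c\<in>S. count_list xs c) = length (filter (\<lambda>x. x \<in> S) xs)"
proof (induction xs)
  case Nil
  then show ?case by simp
next
  case (Cons a xs)
  have "(\<Sum>c\<in>S. count_list (a # xs) c) = (\<Sum>c\<in>S. count_list xs c + (if a = c then 1 else 0))"
    by (rule sum.cong, auto)
  also have "\<dots> = (\<Sum>c\<in>S. count_list xs c) + (\<Sum>c\<in>S. (if a = c then 1 else 0))"
    by (rule sum.distrib)
  also have "(\<Sum>c\<in>S. (if a = c then 1 else 0)) = (if a \<in> S then 1 else (0::nat))"
    using assms by (simp add: sum.delta)
  finally show ?case using Cons by simp
qed

lemma count_pos_roots:
  fixes d :: "nat \<Rightarrow> real"
  shows "(\<Sum>c\<in>{c. poly (\<Prod>a\<leftarrow>map d [0..<n]. [:- a, 1:]) c = 0 \<and> P c}. Polynomial.order c (\<Prod>a\<leftarrow>map d [0..<n]. [:- a, 1:]))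
     = card {i. i < n \<and> P (d i)}"
proof -
  let ?ds = "map d [0..<n]"
  have S: "{c. poly (\<Prod>a\<leftarrow>?ds. [:- a, 1:]) c = 0 \<and> P c} = {c. c \<in> set ?ds \<and> P c}"
    by (auto simp: poly_prod_list_zero_iff)
  have fin: "finite {c. c \<in> set ?ds \<and> P c}" by simp
  have "(\<Sum>c\<in>{c. c \<in> set ?ds \<and> P c}. Polynomial.order c (\<Prod>a\<leftarrow>?ds. [:- a, 1:]))
     = length (filter (\<lambda>x. x \<in> {c. c \<in> set ?ds \<and> P c}) ?ds)"
    unfolding order_linear_prod by (rule sum_count_list[OF fin])
  also have "filter (\<lambda>x. x \<in> {c. c \<in> set ?ds \<and> P c}) ?ds = filter P ?ds"
    by (rule filter_cong, auto)
  also have "length (filter P ?ds) = card {i. i < n \<and> P (d i)}"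
    by (simp add: length_filter_conv_card, rule arg_cong[where f=card], auto)
  finally show ?thesis unfolding S .
qed


lemma char_poly_diag:
  fixes A Q :: "real mat"
  assumes A: "A \<in> carrier_mat n n" and Q: "Q \<in> carrier_mat n n" and Qo: "transpose_mat Q * Q = 1\<^sub>m n"
   and D: "transpose_mat Q * A * Q = mat n n (\<lambda>(i,j). if i = j then d i else 0)"
  shows "char_poly A = (\<Prod>a\<leftarrow>map d [0..<n]. [:- a, 1:])"
proof -
  define L where "L = mat n n (\<lambda>(i,j). if i = j then d i else (0::real))"
  have L: "L \<in> carrier_mat n n" unfolding L_def by simp
  have Qt: "transpose_mat Q \<in> carrier_mat n n" using Q by simp
  have QQt: "Q * transpose_mat Q = 1\<^sub>m n" by (rule mat_mult_left_right_inverse[OF Qt Q Qo])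
  have "Q * L * transpose_mat Q = Q * (transpose_mat Q * A * Q) * transpose_mat Q"
    unfolding L_def D ..
  also have "Q * (transpose_mat Q * A * Q) = (Q * (transpose_mat Q * A)) * Q"
    by (rule assoc_mult_mat[OF Q mult_carrier_mat[OF Qt A] Q, symmetric])
  also have "Q * (transpose_mat Q * A) = (Q * transpose_mat Q) * A"
    by (rule assoc_mult_mat[OF Q Qt A, symmetric])
  also have "(Q * transpose_mat Q) * A = A" unfolding QQt using A by simp
  also have "A * Q * transpose_mat Q = A * (Q * transpose_mat Q)"
    by (rule assoc_mult_mat[OF A Q Qt])
  also have "\<dots> = A" unfolding QQt using A by simp
  finally have AL: "A = Q * L * transpose_mat Q" by simp
  have "similar_mat A L"
    unfolding similar_mat_def similar_mat_wit_def Let_def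
    by (rule exI[of _ Q], rule exI[of _ "transpose_mat Q"], insert A L Q Qt QQt Qo AL, auto)
  hence "char_poly A = char_poly L" by (rule char_poly_similar)
  also have "\<dots> = (\<Prod>a\<leftarrow>diag_mat L. [:- a, 1:])"
    by (rule char_poly_upper_triangular[OF L], auto simp: upper_triangular_def L_def)
  also have "diag_mat L = map d [0..<n]" unfolding diag_mat_def L_def by simp
  finally show ?thesis .
qed

lemma eigs_diag:
  fixes A Q :: "real mat"
  assumes A: "A \<in> carrier_mat n n" and Q: "Q \<in> carrier_mat n n" and Qo: "transpose_mat Q * Q = 1\<^sub>m n"
   and D: "transpose_mat Q * A * Q = mat n n (\<lambda>(i,j). if i = j then d i else 0)"
  shows "pos_eigs A = card {i. i < n \<and> d i > 0}" "neg_eigs A = card {i. i < n \<and> d i < 0}"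
    "eigenvalue A c \<longleftrightarrow> (\<exists>i<n. d i = c)"
proof -
  note cp = char_poly_diag[OF A Q Qo D]
  have ev: "\<And>c. eigenvalue A c \<longleftrightarrow> poly (\<Prod>a\<leftarrow>map d [0..<n]. [:- a, 1:]) c = 0"
    using eigenvalue_root_char_poly[OF A] cp by simp
  show "pos_eigs A = card {i. i < n \<and> d i > 0}" unfolding pos_eigs_def ev cp
    by (rule count_pos_roots)
  show "neg_eigs A = card {i. i < n \<and> d i < 0}" unfolding neg_eigs_def ev cp
    by (rule count_pos_roots)
  show "eigenvalue A c \<longleftrightarrow> (\<exists>i<n. d i = c)" unfolding ev
    by (auto simp: poly_prod_list_zero_iff)
qed


lemma transpose_move:
  fixes B :: "'a :: comm_semiring_0 mat"
  assumes B: "B \<in> carrier_mat n k" and u: "u \<in> carrier_vec k" and w: "w \<in> carrier_vec n"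
  shows "u \<bullet> (transpose_mat B *\<^sub>v w) = (B *\<^sub>v u) \<bullet> w"
proof -
  have "u \<bullet> (transpose_mat B *\<^sub>v w) = (\<Sum>i<k. u $ i * (\<Sum>j<n. B $$ (j,i) * w $ j))"
    using B u w by (auto simp: scalar_prod_def lessThan_atLeast0 intro!: sum.cong)
  also have "\<dots> = (\<Sum>i<k. \<Sum>j<n. u $ i * B $$ (j,i) * w $ j)"
    by (simp add: sum_distrib_left ac_simps)
  also have "\<dots> = (\<Sum>j<n. \<Sum>i<k. u $ i * B $$ (j,i) * w $ j)" by (rule sum.swap)
  also have "\<dots> = (\<Sum>j<n. (\<Sum>i<k. B $$ (j,i) * u $ i) * w $ j)"
    by (rule sum.cong[OF refl], simp add: sum_distrib_right sum_distrib_left ac_simps)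
  also have "\<dots> = (B *\<^sub>v u) \<bullet> w"
    using B u w by (auto simp: scalar_prod_def lessThan_atLeast0 intro!: sum.cong)
  finally show ?thesis .
qed

lemma diag_quad:
  fixes c :: "real vec"
  assumes c: "c \<in> carrier_vec n"
  shows "c \<bullet> (mat n n (\<lambda>(i,j). if i = j then d i else 0) *\<^sub>v c) = (\<Sum>i<n. d i * (c $ i)^2)"
proof -
  have "\<And>i. i < n \<Longrightarrow> (mat n n (\<lambda>(i,j). if i = j then d i else 0) *\<^sub>v c) $ i = d i * c $ i"
  proof -
    fix i assume i: "i < n"
    have "(mat n n (\<lambda>(i,j). if i = j then d i else 0) *\<^sub>v c) $ i = (\<Sum>j<n. (if i = j then d i else 0) * c $ j)"
      using i c by (auto simp: scalar_prod_def lessThan_atLeast0 intro!: sum.cong)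
    also have "\<dots> = (\<Sum>j<n. if i = j then d i * c $ j else 0)" by (rule sum.cong, auto)
    also have "\<dots> = d i * c $ i" using i by simp
    finally show "(mat n n (\<lambda>(i,j). if i = j then d i else 0) *\<^sub>v c) $ i = d i * c $ i" .
  qed
  thus ?thesis using c by (auto simp: scalar_prod_def lessThan_atLeast0 power2_eq_square ac_simps intro!: sum.cong)
qed

lemma kernel_exists:
  fixes rs :: "real vec list"
  assumes rs: "set rs \<subseteq> carrier_vec n" and len: "length rs < n"
  shows "\<exists>c \<in> carrier_vec n. c \<noteq> 0\<^sub>v n \<and> (\<forall>r\<in>set rs. r \<bullet> c = 0)"
proof -
  define f where "f = (\<lambda>i. if i < length rs then rs ! i else 0\<^sub>v n)"
  define M where "M = mat\<^sub>r n n (\<lambda>i. if i = n - 1 then 0\<^sub>v n else f i)"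
  have f: "f \<in> {0..<n} \<rightarrow> carrier_vec n" unfolding f_def using rs by (auto simp: nth_mem subsetD)
  have M: "M \<in> carrier_mat n n" unfolding M_def by auto
  have "det M = 0" unfolding M_def by (rule det_row_0[OF _ f], insert len, auto)
  then obtain c where c: "c \<in> carrier_vec n" "c \<noteq> 0\<^sub>v n" "M *\<^sub>v c = 0\<^sub>v n"
    using det_0_iff_vec_prod_zero[OF M] by auto
  have "\<forall>r\<in>set rs. r \<bullet> c = 0"
  proof
    fix r assume "r \<in> set rs"
    then obtain i where i: "i < length rs" and r: "r = rs ! i" by (auto simp: in_set_conv_nth)
    have ri: "rs ! i \<in> carrier_vec n" using rs i by auto
    have "row M i = rs ! i" unfolding M_def using i len ri f_def by auto
    hence "(M *\<^sub>v c) $ i = rs ! i \<bullet> c" using M i len by auto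
    thus "r \<bullet> c = 0" using c(3) r i len by auto
  qed
  thus ?thesis using c by auto
qed


lemma card_filter_upt: "length (filter P [0..<n]) = card {i. i < n \<and> P i}"
  by (simp add: length_filter_conv_card, rule arg_cong[where f=card], auto)

lemma sylvester_le:
  fixes A W Q :: "real mat" and s d :: "nat \<Rightarrow> real"
  assumes W: "W \<in> carrier_mat n n" and Q: "Q \<in> carrier_mat n n"
   and A: "A = transpose_mat W * mat n n (\<lambda>(i,j). if i = j then s i else 0) * W"
   and D: "transpose_mat Q * A * Q = mat n n (\<lambda>(i,j). if i = j then d i else 0)"
  shows "card {i. i < n \<and> \<sigma> * d i > 0} \<le> card {j. j < n \<and> \<sigma> * s j > 0}"
proof (rule ccontr)
  assume "\<not> ?thesis"
  hence lt: "card {j. j < n \<and> \<sigma> * s j > 0} < card {i. i < n \<and> \<sigma> * d i > 0}" by simp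
  define S where "S = mat n n (\<lambda>(i,j). if i = j then s i else (0::real))"
  have S: "S \<in> carrier_mat n n" unfolding S_def by simp
  have Qt: "transpose_mat Q \<in> carrier_mat n n" using Q by simp
  have Wt: "transpose_mat W \<in> carrier_mat n n" using W by simp
  have WQ: "W * Q \<in> carrier_mat n n" using W Q by simp
  define rs where "rs = map (\<lambda>j. row (W * Q) j) (filter (\<lambda>j. \<sigma> * s j > 0) [0..<n])
     @ map (\<lambda>i. unit_vec n i) (filter (\<lambda>i. \<not> \<sigma> * d i > 0) [0..<n])"
  have "card {i. i < n \<and> \<not> \<sigma> * d i > 0} = n - card {i. i < n \<and> \<sigma> * d i > 0}"
  proof -
    have "{i. i < n \<and> \<not> \<sigma> * d i > 0} = {..<n} - {i. i < n \<and> \<sigma> * d i > 0}" by auto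
    moreover have "card ({..<n} - {i. i < n \<and> \<sigma> * d i > 0}) = card {..<n} - card {i. i < n \<and> \<sigma> * d i > 0}"
      by (rule card_Diff_subset, auto)
    ultimately show ?thesis by simp
  qed
  moreover have "card {i. i < n \<and> \<sigma> * d i > 0} \<le> n"
    by (rule order.trans[OF card_mono[of "{..<n}"]], auto)
  ultimately have len: "length rs < n" unfolding rs_def using lt by (simp add: card_filter_upt)
  have rsc: "set rs \<subseteq> carrier_vec n" unfolding rs_def using WQ by auto
  obtain c where c: "c \<in> carrier_vec n" "c \<noteq> 0\<^sub>v n" and rc: "\<forall>r\<in>set rs. r \<bullet> c = 0"
    using kernel_exists[OF rsc len] by auto
  have c0: "\<And>i. i < n \<Longrightarrow> \<not> \<sigma> * d i > 0 \<Longrightarrow> c $ i = 0"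
  proof -
    fix i assume i: "i < n" "\<not> \<sigma> * d i > 0"
    hence "unit_vec n i \<in> set rs" unfolding rs_def by auto
    hence "unit_vec n i \<bullet> c = 0" using rc by auto
    thus "c $ i = 0" using c i by simp
  qed
  define y where "y = (W * Q) *\<^sub>v c"
  have y: "y \<in> carrier_vec n" unfolding y_def using WQ c by simp
  have y0: "\<And>j. j < n \<Longrightarrow> \<sigma> * s j > 0 \<Longrightarrow> y $ j = 0"
  proof -
    fix j assume j: "j < n" "\<sigma> * s j > 0"
    hence "row (W * Q) j \<in> set rs" unfolding rs_def by auto
    hence "row (W * Q) j \<bullet> c = 0" using rc by auto
    moreover have "y $ j = row (W * Q) j \<bullet> c" unfolding y_def
      by (rule index_mult_mat_vec, insert W j, simp)
    ultimately show "y $ j = 0" by simp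
  qed
  define L where "L = mat n n (\<lambda>(i,j). if i = j then d i else (0::real))"
  have "\<sigma> * (c \<bullet> (L *\<^sub>v c)) = \<sigma> * (\<Sum>i<n. d i * (c $ i)^2)" unfolding L_def by (subst diag_quad[OF c(1)], rule refl)
  also have "\<dots> = (\<Sum>i<n. \<sigma> * d i * (c $ i)^2)" by (simp add: sum_distrib_left ac_simps)
  also have "\<dots> > 0"
  proof -
    have "\<exists>i<n. c $ i \<noteq> 0" using c by (metis eq_vecI carrier_vecD index_zero_vec)
    then obtain i where i: "i < n" "c $ i \<noteq> 0" by auto
    hence di: "\<sigma> * d i > 0" using c0 by auto
    show ?thesis
    proof (rule sum_pos2[of _ i])
      show "0 < \<sigma> * d i * (c $ i)^2" using di i by simp
      fix j assume "j \<in> {..<n}"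
      thus "0 \<le> \<sigma> * d j * (c $ j)^2" using c0[of j] by (cases "\<sigma> * d j > 0", auto)
    qed (insert i, auto)
  qed
  finally have pos: "\<sigma> * (c \<bullet> (L *\<^sub>v c)) > 0" .
  have A': "A \<in> carrier_mat n n" unfolding A S_def[symmetric]
    by (rule mult_carrier_mat[OF mult_carrier_mat[OF Wt S] W])
  define x where "x = Q *\<^sub>v c"
  have x: "x \<in> carrier_vec n" unfolding x_def using Q c by simp
  have "c \<bullet> (L *\<^sub>v c) = c \<bullet> (transpose_mat Q *\<^sub>v (A *\<^sub>v x))"
    unfolding L_def D[symmetric] x_def
    using assoc_mult_mat_vec[OF mult_carrier_mat[OF Qt A'] Q c(1)] assoc_mult_mat_vec[OF Qt A' x[unfolded x_def]]
    by simp
  also have "\<dots> = x \<bullet> (A *\<^sub>v x)"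
    unfolding x_def by (rule transpose_move[OF Q c(1)], insert A' x[unfolded x_def], simp)
  also have "A *\<^sub>v x = transpose_mat W *\<^sub>v (S *\<^sub>v (W *\<^sub>v x))"
    unfolding A S_def[symmetric]
    using assoc_mult_mat_vec[OF mult_carrier_mat[OF Wt S] W x] assoc_mult_mat_vec[OF Wt S mult_mat_vec_carrier[OF W x]]
    by simp
  also have "x \<bullet> (transpose_mat W *\<^sub>v (S *\<^sub>v (W *\<^sub>v x))) = (W *\<^sub>v x) \<bullet> (S *\<^sub>v (W *\<^sub>v x))"
    by (rule transpose_move[OF W x], insert S W x, simp)
  also have "W *\<^sub>v x = y" unfolding x_def y_def using W Q c by simp
  also have "y \<bullet> (S *\<^sub>v y) = (\<Sum>j<n. s j * (y $ j)^2)" unfolding S_def by (rule diag_quad[OF y])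
  finally have eq: "c \<bullet> (L *\<^sub>v c) = (\<Sum>j<n. s j * (y $ j)^2)" .
  have "\<sigma> * (\<Sum>j<n. s j * (y $ j)^2) = (\<Sum>j<n. \<sigma> * s j * (y $ j)^2)" by (simp add: sum_distrib_left ac_simps)
  also have "\<dots> \<le> 0"
  proof (rule sum_nonpos)
    fix j assume "j \<in> {..<n}"
    thus "\<sigma> * s j * (y $ j)^2 \<le> 0" using y0[of j] by (cases "\<sigma> * s j > 0", auto simp: mult_nonpos_nonneg)
  qed
  finally show False using pos eq by simp
qed



lemma simplex_list_props:
  assumes "simplicial_complex G"
  shows "distinct (simplex_list G) \<and> set (simplex_list G) = G"
proof -
  have "finite G" using assms unfolding simplicial_complex_def by auto
  hence "\<exists>xs. distinct xs \<and> set xs = G" using finite_distinct_list by blast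
  thus ?thesis unfolding simplex_list_def by (rule someI_ex)
qed

lemma alt_sum_pow:
  assumes "finite T"
  shows "(\<Sum>z\<in>Pow T. (-1::real) ^ card z) = (if T = {} then 1 else 0)"
proof (cases "T = {}")
  case True thus ?thesis by simp
next
  case False
  have fin: "finite (Pow T)" using assms by simp
  have "card {z. z \<subseteq> T \<and> {} \<subseteq> z \<and> even (card z)} = card {z. z \<subseteq> T \<and> {} \<subseteq> z \<and> odd (card z)}"
    by (rule card_subsupersets_even_odd[OF assms], insert False, auto)
  hence "card {z. z \<in> Pow T \<and> even (card z)} = card {z. z \<in> Pow T \<and> odd (card z)}" by simp
  from sum_alternating_cancels[OF fin this] False show ?thesis by simp
qed

lemma card_nth_filter:
  assumes "distinct xs"
  shows "card {j. j < length xs \<and> P (xs ! j)} = card {x \<in> set xs. P x}"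
proof -
  have "(!) xs ` {j. j < length xs \<and> P (xs ! j)} = {x \<in> set xs. P x}"
    by (auto simp: in_set_conv_nth)
  moreover have "inj_on ((!) xs) {j. j < length xs \<and> P (xs ! j)}"
    using assms by (auto simp: inj_on_def nth_eq_iff_index_eq)
  ultimately show ?thesis by (metis card_image)
qed

lemma sum_nth_distinct:
  assumes "distinct xs"
  shows "(\<Sum>k<length xs. f (xs ! k)) = (\<Sum>x\<in>set xs. f x)"
proof -
  have "bij_betw ((!) xs) {..<length xs} (set xs)" by (rule bij_betw_nth[OF assms refl refl])
  thus ?thesis by (rule sum.reindex_bij_betw)
qed

lemma tsw_entry:
  fixes W :: "real mat"
  assumes W: "W \<in> carrier_mat n n" and i: "i < n" and j: "j < n"
  shows "(transpose_mat W * mat n n (\<lambda>(i,j). if i = j then s i else 0) * W) $$ (i,j)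
     = (\<Sum>k<n. W $$ (k,i) * s k * W $$ (k,j))"
proof -
  define S where "S = mat n n (\<lambda>(i,j). if i = j then s i else (0::real))"
  have S: "S \<in> carrier_mat n n" unfolding S_def by simp
  have Wt: "transpose_mat W \<in> carrier_mat n n" using W by simp
  have SW: "\<And>k. k < n \<Longrightarrow> (S * W) $$ (k,j) = s k * W $$ (k,j)"
  proof -
    fix k assume k: "k < n"
    have "(S * W) $$ (k,j) = (\<Sum>l<n. (if k = l then s k else 0) * W $$ (l,j))"
      using S W k j by (auto simp: S_def scalar_prod_def lessThan_atLeast0 intro!: sum.cong)
    also have "\<dots> = (\<Sum>l<n. if k = l then s k * W $$ (l,j) else 0)" by (rule sum.cong, auto)
    also have "\<dots> = s k * W $$ (k,j)" using k by simp
    finally show "(S * W) $$ (k,j) = s k * W $$ (k,j)" .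
  qed
  have "transpose_mat W * S * W = transpose_mat W * (S * W)" by (rule assoc_mult_mat[OF Wt S W])
  also have "\<dots> $$ (i,j) = (\<Sum>k<n. W $$ (k,i) * (S * W) $$ (k,j))"
    using W S i j by (auto simp: scalar_prod_def lessThan_atLeast0 intro!: sum.cong)
  also have "\<dots> = (\<Sum>k<n. W $$ (k,i) * s k * W $$ (k,j))" by (rule sum.cong, auto simp: SW)
  finally show ?thesis unfolding S_def .
qed

lemma conn_factor:
  assumes sc: "simplicial_complex G"
  defines "xs \<equiv> simplex_list G"
  defines "W \<equiv> mat (length xs) (length xs) (\<lambda>(k,i). if xs ! k \<subseteq> xs ! i then 1 else (0::real))"
  defines "s \<equiv> (\<lambda>k. (-1::real) ^ sdim (xs ! k))"
  shows "connection_matrix G = transpose_mat W * mat (length xs) (length xs) (\<lambda>(i,j). if i = j then s i else 0) * W"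
proof -
  let ?N = "length xs"
  from simplex_list_props[OF sc] have dist: "distinct xs" and set: "set xs = G" unfolding xs_def by auto
  from sc have fin: "\<And>x. x \<in> G \<Longrightarrow> finite x" and ne: "\<And>x. x \<in> G \<Longrightarrow> x \<noteq> {}"
    and cl: "\<And>x y. x \<in> G \<Longrightarrow> y \<subseteq> x \<Longrightarrow> y \<noteq> {} \<Longrightarrow> y \<in> G"
    unfolding simplicial_complex_def by blast+
  have W: "W \<in> carrier_mat ?N ?N" unfolding W_def by simp
  show ?thesis
  proof (rule eq_matI)
    fix i j assume "i < dim_row (transpose_mat W * mat ?N ?N (\<lambda>(i,j). if i = j then s i else 0) * W)"
      "j < dim_col (transpose_mat W * mat ?N ?N (\<lambda>(i,j). if i = j then s i else 0) * W)"
    hence i: "i < ?N" and j: "j < ?N" using W by auto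
    define T where "T = xs ! i \<inter> xs ! j"
    have xi: "xs ! i \<in> G" using i set by auto
    have finT: "finite T" unfolding T_def using fin[OF xi] by auto
    have "(transpose_mat W * mat ?N ?N (\<lambda>(i,j). if i = j then s i else 0) * W) $$ (i,j)
       = (\<Sum>k<?N. W $$ (k,i) * s k * W $$ (k,j))" by (rule tsw_entry[OF W i j])
    also have "\<dots> = (\<Sum>k<?N. (\<lambda>z. if z \<subseteq> T then (-1::real) ^ sdim z else 0) (xs ! k))"
      by (rule sum.cong, insert i j, auto simp: W_def s_def T_def)
    also have "\<dots> = (\<Sum>z\<in>G. if z \<subseteq> T then (-1::real) ^ sdim z else 0)"
      using sum_nth_distinct[OF dist, of "\<lambda>z. if z \<subseteq> T then (-1::real) ^ sdim z else 0"] set by simp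
    also have "\<dots> = (\<Sum>z\<in>{z\<in>G. z \<subseteq> T}. (-1::real) ^ sdim z)"
      by (subst sum.inter_filter[symmetric], insert sc, auto simp: simplicial_complex_def)
    also have "{z\<in>G. z \<subseteq> T} = Pow T - {{}}"
      using ne cl[OF xi] unfolding T_def by auto
    also have "(\<Sum>z\<in>Pow T - {{}}. (-1::real) ^ sdim z) = (\<Sum>z\<in>Pow T - {{}}. - ((-1::real) ^ card z))"
    proof (rule sum.cong)
      fix z assume z: "z \<in> Pow T - {{}}"
      hence "card z \<noteq> 0" using finT by (auto simp: finite_subset)
      then obtain m where "card z = Suc m" by (cases "card z", auto)
      thus "(-1::real) ^ sdim z = - ((-1::real) ^ card z)" unfolding sdim_def by simp
    qed simp
    also have "\<dots> = - ((\<Sum>z\<in>Pow T. (-1::real) ^ card z) - 1)"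
      using finT by (simp add: sum.remove[of "Pow T" "{}"] sum_negf)
    also have "\<dots> = (if T \<noteq> {} then 1 else 0)" unfolding alt_sum_pow[OF finT] by simp
    also have "\<dots> = connection_matrix G $$ (i,j)"
      unfolding connection_matrix_def Let_def xs_def[symmetric] T_def using i j by simp
    finally show "connection_matrix G $$ (i,j) = (transpose_mat W * mat ?N ?N (\<lambda>(i,j). if i = j then s i else 0) * W) $$ (i,j)" by simp
  qed (insert W, auto simp: connection_matrix_def Let_def xs_def)
qed

lemma W_det:
  assumes dist: "distinct xs" and fin: "\<forall>x\<in>set xs. finite x"
  defines "W \<equiv> mat (length xs) (length xs) (\<lambda>(k,i). if xs ! k \<subseteq> xs ! i then 1 else (0::real))"
  shows "det W \<noteq> 0"
proof
  let ?N = "length xs"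
  have W: "W \<in> carrier_mat ?N ?N" unfolding W_def by simp
  assume "det W = 0"
  then obtain v where v: "v \<in> carrier_vec ?N" "v \<noteq> 0\<^sub>v ?N" "W *\<^sub>v v = 0\<^sub>v ?N"
    using det_0_iff_vec_prod_zero[OF W] by auto
  define I where "I = {i. i < ?N \<and> v $ i \<noteq> 0}"
  have "\<exists>i<?N. v $ i \<noteq> 0" using v by (metis eq_vecI carrier_vecD index_zero_vec)
  hence "I \<noteq> {}" unfolding I_def by auto
  moreover have fI: "finite I" unfolding I_def by simp
  ultimately have "Max ((\<lambda>i. card (xs ! i)) ` I) \<in> (\<lambda>i. card (xs ! i)) ` I" by simp
  then obtain i where iI: "i \<in> I" and imax: "card (xs ! i) = Max ((\<lambda>i. card (xs ! i)) ` I)" by auto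
  have max: "\<And>j. j \<in> I \<Longrightarrow> card (xs ! j) \<le> card (xs ! i)" unfolding imax using fI by simp
  have i: "i < ?N" "v $ i \<noteq> 0" using iI unfolding I_def by auto
  have "(W *\<^sub>v v) $ i = (\<Sum>j<?N. (if xs ! i \<subseteq> xs ! j then 1 else 0) * v $ j)"
    using W v(1) i by (auto simp: W_def scalar_prod_def lessThan_atLeast0 intro!: sum.cong)
  also have "\<dots> = (\<Sum>j<?N. if j = i then v $ i else 0)"
  proof (rule sum.cong)
    fix j assume j: "j \<in> {..<?N}"
    show "(if xs ! i \<subseteq> xs ! j then 1 else 0) * v $ j = (if j = i then v $ i else 0)"
    proof (cases "j = i")
      case False
      show ?thesis
      proof (cases "xs ! i \<subseteq> xs ! j \<and> v $ j \<noteq> 0")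
        case True
        hence "j \<in> I" using j unfolding I_def by auto
        hence "card (xs ! j) \<le> card (xs ! i)" by (rule max)
        moreover have "finite (xs ! j)" using fin j by auto
        ultimately have "xs ! i = xs ! j" using True card_seteq by blast
        hence "i = j" using dist i j by (simp add: nth_eq_iff_index_eq)
        thus ?thesis using False by simp
      qed (insert False, auto)
    qed simp
  qed simp
  also have "\<dots> = v $ i" using i by simp
  finally show False using v i by simp
qed


theorem theorem3:
  fixes G :: "'a set set"
  assumes "simplicial_complex G"
  shows "card {x\<in>G. even (sdim x)} = pos_eigs (connection_matrix G)
       \<and> card {x\<in>G. odd (sdim x)} = neg_eigs (connection_matrix G)
       \<and> euler_char G = int (pos_eigs (connection_matrix G)) - int (neg_eigs (connection_matrix G))"
proof -
  note sc = assms
  define xs where "xs = simplex_list G"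
  define N where "N = length xs"
  define W where "W = mat N N (\<lambda>(k,i). if xs ! k \<subseteq> xs ! i then 1 else (0::real))"
  define s where "s = (\<lambda>k. (-1::real) ^ sdim (xs ! k))"
  define S where "S = mat N N (\<lambda>(i,j). if i = j then s i else (0::real))"
  define A where "A = connection_matrix G"
  from simplex_list_props[OF sc] have dist: "distinct xs" and set: "set xs = G" unfolding xs_def by auto
  have finx: "\<forall>x\<in>set xs. finite x" using sc set unfolding simplicial_complex_def by auto
  have AWS: "A = transpose_mat W * S * W"
    unfolding A_def W_def S_def s_def N_def xs_def by (rule conn_factor[OF sc])
  have W: "W \<in> carrier_mat N N" unfolding W_def by simp
  have S: "S \<in> carrier_mat N N" unfolding S_def by simp
  have Wt: "transpose_mat W \<in> carrier_mat N N" using W by simp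
  have Ac: "A \<in> carrier_mat N N" unfolding A_def connection_matrix_def Let_def N_def xs_def by simp
  have Asym: "transpose_mat A = A"
    by (rule eq_matI, insert Ac, auto simp: A_def connection_matrix_def Let_def Int_commute)
  obtain Q d where Q: "Q \<in> carrier_mat N N" and Qo: "transpose_mat Q * Q = 1\<^sub>m N"
    and D: "transpose_mat Q * A * Q = mat N N (\<lambda>(i,j). if i = j then d i else 0)"
    using spectral[OF Ac Asym] by blast
  note ed = eigs_diag[OF Ac Q Qo D]
  have le1: "card {i. i < N \<and> 1 * d i > 0} \<le> card {j. j < N \<and> 1 * s j > 0}"
    by (rule sylvester_le[OF W Q AWS[unfolded S_def] D])
  have le2: "card {i. i < N \<and> (-1) * d i > 0} \<le> card {j. j < N \<and> (-1) * s j > 0}"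
    by (rule sylvester_le[OF W Q AWS[unfolded S_def] D])
  have s0: "\<And>j. s j \<noteq> 0" unfolding s_def by simp
  have detS: "det S \<noteq> 0"
  proof -
    have "det S = prod_list (diag_mat S)"
      by (rule det_upper_triangular[OF _ S], auto simp: upper_triangular_def S_def)
    also have "diag_mat S = map s [0..<N]" unfolding diag_mat_def S_def by simp
    finally show ?thesis using s0 by (auto simp: prod_list_zero_iff)
  qed
  have detW: "det W \<noteq> 0" unfolding W_def N_def by (rule W_det[OF dist finx])
  have detA: "det A \<noteq> 0"
  proof -
    have "det A = det (transpose_mat W * S) * det W"
      unfolding AWS by (rule det_mult[OF mult_carrier_mat[OF Wt S] W])
    also have "det (transpose_mat W * S) = det (transpose_mat W) * det S" by (rule det_mult[OF Wt S])
    also have "det (transpose_mat W) = det W" by (rule det_transpose[OF W])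
    finally show ?thesis using detS detW by simp
  qed
  have d0: "\<And>i. i < N \<Longrightarrow> d i \<noteq> 0"
  proof
    fix i assume i: "i < N" and di: "d i = 0"
    hence "eigenvalue A 0" using ed(3)[of 0] by auto
    then obtain v where "eigenvector A v 0" unfolding eigenvalue_def by auto
    hence "v \<in> carrier_vec N" "v \<noteq> 0\<^sub>v N" "A *\<^sub>v v = 0\<^sub>v N"
      unfolding eigenvector_def using Ac by auto
    hence "det A = 0" using det_0_iff_vec_prod_zero[OF Ac] by auto
    thus False using detA by simp
  qed
  have split: "\<And>f :: nat \<Rightarrow> real. (\<And>i. i < N \<Longrightarrow> f i \<noteq> 0) \<Longrightarrow>
      card {i. i < N \<and> f i > 0} + card {i. i < N \<and> f i < 0} = N"
  proof -
    fix f :: "nat \<Rightarrow> real" assume f: "\<And>i. i < N \<Longrightarrow> f i \<noteq> 0"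
    have "{i. i < N \<and> f i > 0} \<union> {i. i < N \<and> f i < 0} = {..<N}" using f by force
    moreover have "card ({i. i < N \<and> f i > 0} \<union> {i. i < N \<and> f i < 0}) = card {i. i < N \<and> f i > 0} + card {i. i < N \<and> f i < 0}"
      by (rule card_Un_disjoint, auto)
    ultimately show "card {i. i < N \<and> f i > 0} + card {i. i < N \<and> f i < 0} = N" by simp
  qed
  have sd: "card {i. i < N \<and> d i > 0} + card {i. i < N \<and> d i < 0} = N" by (rule split[OF d0])
  have ss: "card {i. i < N \<and> s i > 0} + card {i. i < N \<and> s i < 0} = N" by (rule split[OF s0])
  have le1': "card {i. i < N \<and> d i > 0} \<le> card {j. j < N \<and> s j > 0}" using le1 by simp
  have le2': "card {i. i < N \<and> d i < 0} \<le> card {j. j < N \<and> s j < 0}"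
  proof -
    have "{i. i < N \<and> (-1) * d i > 0} = {i. i < N \<and> d i < 0}" by auto
    moreover have "{j. j < N \<and> (-1) * s j > 0} = {j. j < N \<and> s j < 0}" by auto
    ultimately show ?thesis using le2 by simp
  qed
  have p: "pos_eigs A = card {j. j < N \<and> s j > 0}" using ed(1) le1' le2' sd ss by linarith
  have n: "neg_eigs A = card {j. j < N \<and> s j < 0}" using ed(2) le1' le2' sd ss by linarith
  have spos: "\<And>j. s j > 0 \<longleftrightarrow> even (sdim (xs ! j))" unfolding s_def
    by (auto simp: minus_one_power_iff)
  have sneg: "\<And>j. s j < 0 \<longleftrightarrow> odd (sdim (xs ! j))" unfolding s_def
    by (auto simp: minus_one_power_iff)
  have ce: "card {x\<in>G. even (sdim x)} = pos_eigs A"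
    unfolding p spos N_def using card_nth_filter[OF dist, of "\<lambda>x. even (sdim x)"] set by simp
  have co: "card {x\<in>G. odd (sdim x)} = neg_eigs A"
    unfolding n sneg N_def using card_nth_filter[OF dist, of "\<lambda>x. odd (sdim x)"] set by simp
  have finG: "finite G" using sc unfolding simplicial_complex_def by auto
  have "euler_char G = (\<Sum>x\<in>G. if even (sdim x) then 1 else -1)"
    unfolding euler_char_def by (rule sum.cong, auto)
  also have "\<dots> = int (card (G \<inter> {x. even (sdim x)})) - int (card (G \<inter> - {x. even (sdim x)}))"
    using finG by (simp add: sum.If_cases sum_negf)
  also have "G \<inter> {x. even (sdim x)} = {x\<in>G. even (sdim x)}" by auto
  also have "G \<inter> - {x. even (sdim x)} = {x\<in>G. odd (sdim x)}" by auto
  finally have "euler_char G = int (pos_eigs A) - int (neg_eigs A)" unfolding ce co .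
  thus ?thesis using ce co unfolding A_def by simp
qed

end
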